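(* For all positive integers $k,q,m$ with $q<k$ one has $\alpha^k_{q,m}=0$; that is, every M-partition of type $(k,q,m)$ satisfies $q\geqslant k$.
   Context: Let $\mathbb N=\mathbb Z_{\geqslant 0}$ with the componentwise order. For integers $n,d\geqslant 0$, an $(n-1)$-dimensional partition of size $d$ is a subset $\lambda\subset\mathbb N^n$ with $|\lambda|=d$ closed downward for the componentwise order; $\mathrm P^n_d$ is the set of these. The degree of a point is the sum of its coordinates; $\lambda_{=i}$, $\lambda_{\geqslant i}$ are the elements of degree $i$, resp. $\geqslant i$; $h_\lambda(i)=|\lambda_{=i}|$; $\mathrm{Soc}(\lambda)$ is the set of maximal elements of $\lambda$. For positive integers $k,q,m$, an M-partition of type $(k,q,m)$ is a $\lambda\in\mathrm P^k_{1+k+q+m}$ with $\mathrm{Soc}(\lambda)\subset\lambda_{\geqslant 3}$, $h_\lambda(1)=k$, $h_\lambda(2)=q$ and $\sum_{i\geqslant 3}h_\lambda(i)=m$. $\alpha^k_{q,m}$ denotes the number of M-partitions of type $(k,q,m)$. *)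

theory Defs
  imports Main
begin

text \<open>Points of N^n are represented as lists of naturals of length n.\<close>

definition pt_le :: "nat list \<Rightarrow> nat list \<Rightarrow> bool" where
  "pt_le x y \<longleftrightarrow> length x = length y \<and> (\<forall>i<length x. x ! i \<le> y ! i)"

definition partitions :: "nat \<Rightarrow> nat \<Rightarrow> nat list set set" where
  "partitions n d = {lam. lam \<subseteq> {x. length x = n} \<and> finite lam \<and> card lam = d \<and>
      (\<forall>x\<in>lam. \<forall>y. length y = n \<and> pt_le y x \<longrightarrow> y \<in> lam)}"

definition deg :: "nat list \<Rightarrow> nat" where
  "deg x = sum_list x"

definition hfun :: "nat list set \<Rightarrow> nat \<Rightarrow> nat" where
  "hfun lam i = card {x\<in>lam. deg x = i}"

definition Soc :: "nat list set \<Rightarrow> nat list set" where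
  "Soc lam = {x\<in>lam. \<forall>y\<in>lam. pt_le x y \<longrightarrow> y = x}"

definition M_partition :: "nat \<Rightarrow> nat \<Rightarrow> nat \<Rightarrow> nat list set \<Rightarrow> bool" where
  "M_partition k q m lam \<longleftrightarrow>
     lam \<in> partitions k (1 + k + q + m) \<and>
     Soc lam \<subseteq> {x\<in>lam. deg x \<ge> 3} \<and>
     hfun lam 1 = k \<and> hfun lam 2 = q \<and>
     card {x\<in>lam. deg x \<ge> 3} = m"

definition alpha :: "nat \<Rightarrow> nat \<Rightarrow> nat \<Rightarrow> nat" where
  "alpha k q m = card {lam. M_partition k q m lam}"

end

theory Submission
  imports Defs
begin

lemma deg_sum: "deg x = (\<Sum>j<length x. x!j)"
  unfolding deg_def by (simp add: sum_list_sum_nth atLeast0LessThan)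

lemma sum_upd_minus:
  fixes x :: "nat list"
  assumes "j < length x" "1 \<le> x!j"
  shows "(\<Sum>l<length x. x[j := x!j - 1] ! l) = (\<Sum>l<length x. x!l) - 1"
proof -
  have A: "(\<Sum>l<length x. x!l) = x!j + (\<Sum>l\<in>{..<length x}-{j}. x!l)"
    using assms by (simp add: sum.remove)
  have B: "(\<Sum>l<length x. x[j := x!j - 1] ! l) = (x!j - 1) + (\<Sum>l\<in>{..<length x}-{j}. x[j := x!j - 1] ! l)"
    using assms by (simp add: sum.remove)
  have C: "(\<Sum>l\<in>{..<length x}-{j}. x[j := x!j - 1] ! l) = (\<Sum>l\<in>{..<length x}-{j}. x!l)"
    by (rule sum.cong) auto
  show ?thesis using A B C assms by simp
qed

lemma deg_upd: "j < length x \<Longrightarrow> 1 \<le> x!j \<Longrightarrow> deg (x[j := x!j - 1]) = deg x - 1"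
  using sum_upd_minus[of j x] by (simp add: deg_sum)

lemma pt_le_upd: "pt_le (x[j := x!j - 1]) x"
  unfolding pt_le_def
  by (cases "j < length x") (auto simp: nth_list_update list_update_beyond)

lemma pt_le_trans: "pt_le a b \<Longrightarrow> pt_le b c \<Longrightarrow> pt_le a c"
  unfolding pt_le_def by (metis le_trans)

lemma pt_le_deg: "pt_le a b \<Longrightarrow> deg a \<le> deg b"
  unfolding pt_le_def deg_sum by (auto intro: sum_mono)

lemma pt_le_deg_eq: assumes "pt_le a b" "deg a = deg b" shows "a = b"
proof -
  have l: "length a = length b" and le: "\<forall>i<length a. a!i \<le> b!i" using assms(1) unfolding pt_le_def by auto
  have "(\<Sum>j<length a. b!j - a!j) = (\<Sum>j<length a. b!j) - (\<Sum>j<length a. a!j)"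
    using le by (intro sum_subtractf_nat) auto
  also have "\<dots> = 0" using assms(2) l by (simp add: deg_sum)
  finally have "\<forall>j<length a. b!j - a!j = 0" by simp
  then show ?thesis using l le by (auto intro: nth_equalityI simp: le_antisym)
qed

lemma coord_le_deg: "j < length x \<Longrightarrow> x!j \<le> deg x"
  unfolding deg_sum by (rule member_le_sum) auto

lemma dec_exists:
  assumes "2 \<le> deg s" "1 \<le> s!i" "i < length s"
  shows "\<exists>j<length s. 1 \<le> s!j \<and> (j \<noteq> i \<or> 2 \<le> s!i)"
proof (rule ccontr)
  assume H: "\<not> ?thesis"
  have "\<forall>j\<in>{..<length s}-{i}. s!j = 0" using H by (simp add: not_le) blast
  hence "(\<Sum>j\<in>{..<length s}-{i}. s!j) = 0" by simp
  moreover have "deg s = s!i + (\<Sum>j\<in>{..<length s}-{i}. s!j)"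
    unfolding deg_sum using assms(3) by (simp add: sum.remove)
  moreover have "\<not> 2 \<le> s!i" using H assms(2,3) by blast
  then have "s!i < 2" by simp
  ultimately show False using assms(1) by simp
qed

lemma graph:
  assumes "finite V" "finite E" "V \<subseteq> {..<k}"
  and "\<forall>y\<in>E. length y = k \<and> deg y = 2 \<and> (\<forall>j<k. 0<y!j \<longrightarrow> j\<in>V)"
  and "\<forall>i\<in>V. \<exists>x. length x = k \<and> deg x = 3 \<and> 0 < x!i \<and> (\<forall>y. length y = k \<and> deg y = 2 \<and> pt_le y x \<longrightarrow> y\<in>E)"
  shows "card V \<le> card E"
using assms
proof (induction "card V" arbitrary: V E rule: less_induct)
  case less
  show ?case
  proof (cases "\<forall>i\<in>V. 2 \<le> (\<Sum>y\<in>E. y!i)")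
    case True
    have "2 * card V = (\<Sum>i\<in>V. 2)" by simp
    also have "\<dots> \<le> (\<Sum>i\<in>V. \<Sum>y\<in>E. y!i)" using True by (intro sum_mono) auto
    also have "\<dots> = (\<Sum>y\<in>E. \<Sum>i\<in>V. y!i)" by (rule sum.swap)
    also have "\<dots> = (\<Sum>y\<in>E. 2)"
    proof (rule sum.cong[OF refl])
      fix y assume "y\<in>E"
      then have y: "length y = k" "deg y = 2" "\<forall>j<k. 0<y!j \<longrightarrow> j\<in>V" using less.prems by auto
      have "(\<Sum>i\<in>V. y!i) = (\<Sum>i<k. y!i)"
      proof (rule sum.mono_neutral_left)
        show "finite {..<k}" by simp
        show "V \<subseteq> {..<k}" using less.prems(3) .
        show "\<forall>i\<in>{..<k} - V. y!i = 0" using y(3) by blast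
      qed
      then show "(\<Sum>i\<in>V. y!i) = 2" using y deg_sum[of y] by simp
    qed
    also have "\<dots> = 2 * card E" by simp
    finally show ?thesis by simp
  next
    case False
    then obtain v where v: "v\<in>V" "(\<Sum>y\<in>E. y!v) \<le> 1" by force
    obtain xv where xv: "length xv = k" "deg xv = 3" "0 < xv!v" "\<forall>y. length y = k \<and> deg y = 2 \<and> pt_le y xv \<longrightarrow> y\<in>E"
      using less.prems(5) v(1) by blast
    have vk: "v < k" using v(1) less.prems(3) by auto
    obtain j where j: "j<k" "1 \<le> xv!j" "j \<noteq> v \<or> 2 \<le> xv!v" using dec_exists[of xv v] xv vk by auto
    define y0 where "y0 = xv[j := xv!j - 1]"
    have y0E: "y0 \<in> E" using xv(4) deg_upd[of j xv] pt_le_upd[of xv j] j xv unfolding y0_def by auto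
    have y0v: "1 \<le> y0!v" using j xv vk unfolding y0_def by (auto simp: nth_list_update)
    have sumsplit: "(\<Sum>y\<in>E. y!v) = y0!v + (\<Sum>y\<in>E-{y0}. y!v)" using y0E less.prems(2) by (simp add: sum.remove)
    have y0v1: "y0!v = 1" using sumsplit y0v v(2) by simp
    have others: "\<forall>y\<in>E-{y0}. y!v = 0" using sumsplit y0v1 v(2) less.prems(2) by simp
    define V' where "V' = V - {v}"
    define E' where "E' = E - {y0}"
    have cV: "card V' < card V" using v(1) less.prems(1) unfolding V'_def by (meson card_Diff1_less)
    have IH: "card V' \<le> card E'"
    proof (rule less.hyps[OF cV])
      show "finite V'" using less.prems(1) unfolding V'_def by simp
      show "finite E'" using less.prems(2) unfolding E'_def by simp
      show "V' \<subseteq> {..<k}" using less.prems(3) unfolding V'_def by auto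
      show "\<forall>y\<in>E'. length y = k \<and> deg y = 2 \<and> (\<forall>j<k. 0<y!j \<longrightarrow> j\<in>V')"
      proof
        fix y assume "y \<in> E'"
        then have yE: "y \<in> E" and yv: "y!v = 0" using others unfolding E'_def by auto
        then have "length y = k \<and> deg y = 2 \<and> (\<forall>j<k. 0<y!j \<longrightarrow> j\<in>V)" using less.prems(4) by blast
        then show "length y = k \<and> deg y = 2 \<and> (\<forall>j<k. 0<y!j \<longrightarrow> j\<in>V')"
          using yv unfolding V'_def by (metis DiffI less_irrefl singletonD)
      qed
      show "\<forall>i\<in>V'. \<exists>x. length x = k \<and> deg x = 3 \<and> 0 < x!i \<and> (\<forall>y. length y = k \<and> deg y = 2 \<and> pt_le y x \<longrightarrow> y\<in>E')"
      proof
        fix i assume i: "i\<in>V'"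
        then have iV: "i\<in>V" "i\<noteq>v" and ik: "i<k" unfolding V'_def using less.prems(3) by auto
        obtain x where x: "length x = k" "deg x = 3" "0 < x!i" "\<forall>y. length y = k \<and> deg y = 2 \<and> pt_le y x \<longrightarrow> y\<in>E"
          using less.prems(5) iV(1) by blast
        show "\<exists>x. length x = k \<and> deg x = 3 \<and> 0 < x!i \<and> (\<forall>y. length y = k \<and> deg y = 2 \<and> pt_le y x \<longrightarrow> y\<in>E')"
        proof (cases "x!v = 0")
          case True
          show ?thesis
          proof (intro exI[of _ x] conjI allI impI)
            fix y assume y: "length y = k \<and> deg y = 2 \<and> pt_le y x"
            then have "y\<in>E" using x by blast
            moreover have "y!v = 0" using y True vk unfolding pt_le_def by (metis le_zero_eq)
            ultimately show "y\<in>E'" using y0v1 unfolding E'_def by auto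
          qed (use x in auto)
        next
          case False
          define a where "a = x[i := x!i - 1]"
          have aE: "a \<in> E" using x(4) deg_upd[of i x] pt_le_upd[of x i] x ik unfolding a_def by auto
          have av: "a!v = x!v" using iV(2) unfolding a_def by simp
          have a0: "a = y0" using aE av False others by (metis DiffI neq0_conv singletonD)
          have xv1: "x!v = 1"
          proof (rule ccontr)
            assume "x!v \<noteq> 1" then have x2: "2 \<le> x!v" using False by simp
            define b where "b = x[v := x!v - 1]"
            have bE: "b\<in>E" using x(4) deg_upd[of v x] pt_le_upd[of x v] x vk False unfolding b_def by auto
            have bv: "1 \<le> b!v" using x2 vk x(1) unfolding b_def by simp
            have "b = y0" using bE bv others by force
            moreover have "a!i \<noteq> b!i" using iV(2) ik x(1,3) unfolding a_def b_def by simp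
            ultimately show False using a0 by simp
          qed
          have rest: "\<forall>w<k. w \<noteq> i \<longrightarrow> w \<noteq> v \<longrightarrow> x!w = 0"
          proof (intro allI impI, rule ccontr)
            fix w assume w: "w<k" "w\<noteq>i" "w\<noteq>v" "x!w \<noteq> 0"
            define c where "c = x[w := x!w - 1]"
            have cE: "c\<in>E" using x(4) deg_upd[of w x] pt_le_upd[of x w] x w unfolding c_def by auto
            have cv: "c!v = 1" using w xv1 unfolding c_def by simp
            have "c = y0" using cE cv others by force
            moreover have "a!w \<noteq> c!w" using w x(1) unfolding a_def c_def by simp
            ultimately show False using a0 by simp
          qed
          have "deg x = (\<Sum>l\<in>{i,v}. x!l)"
            unfolding deg_sum x(1)
          proof (rule sum.mono_neutral_right)
            show "finite {..<k}" by simp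
            show "{i,v} \<subseteq> {..<k}" using ik vk by simp
            show "\<forall>l\<in>{..<k} - {i,v}. x!l = 0" using rest by blast
          qed
          then have "deg x = x!i + x!v" using iV(2) by simp
          then have xi2: "x!i = 2" using x(2) xv1 by simp
          define x' where "x' = (replicate k (0::nat))[i := 3]"
          have x'i: "x'!i = 3" using ik unfolding x'_def by simp
          have x'o: "\<And>l. l \<noteq> i \<Longrightarrow> l < k \<Longrightarrow> x'!l = 0" unfolding x'_def by simp
          have lx': "length x' = k" unfolding x'_def by simp
          show ?thesis
          proof (intro exI[of _ x'] conjI allI impI)
            show "length x' = k" by (rule lx')
            have "(\<Sum>l<k. x'!l) = x'!i + (\<Sum>l\<in>{..<k}-{i}. x'!l)" using ik by (simp add: sum.remove)
            also have "(\<Sum>l\<in>{..<k}-{i}. x'!l) = 0" using x'o by simp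
            finally show "deg x' = 3" unfolding deg_sum lx' using x'i by simp
            show "0 < x'!i" using x'i by simp
            fix y assume y: "length y = k \<and> deg y = 2 \<and> pt_le y x'"
            have yle: "pt_le y x" unfolding pt_le_def
            proof (intro conjI allI impI)
              show "length y = length x" using y x(1) by simp
              fix l assume l: "l < length y"
              show "y!l \<le> x!l"
              proof (cases "l = i")
                case True
                then show ?thesis using coord_le_deg[OF l] y xi2 by simp
              next
                case False
                then have "y!l \<le> x'!l" using y l unfolding pt_le_def by auto
                then show ?thesis using x'o[OF False] l y by simp
              qed
            qed
            then have "y\<in>E" using x y by blast
            moreover have "y!v \<le> x'!v" using y vk unfolding pt_le_def by auto
            then have "y!v = 0" using x'o[OF iV(2)[symmetric] vk] by simp
            ultimately show "y\<in>E'" using y0v1 unfolding E'_def by auto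
          qed
        qed
      qed
    qed
    have "card E' = card E - 1" using y0E less.prems(2) unfolding E'_def by simp
    moreover have "card V' = card V - 1" using v(1) less.prems(1) unfolding V'_def by simp
    moreover have "card E \<ge> 1" using y0E less.prems(2) by (metis One_nat_def Suc_leI card_gt_0_iff empty_iff)
    moreover have "card V \<ge> 1" using v(1) less.prems(1) by (metis One_nat_def Suc_leI card_gt_0_iff empty_iff)
    ultimately show ?thesis using IH by linarith
  qed
qed

lemma down_aux:
  "\<forall>s. deg s = n + d \<longrightarrow> 1 \<le> d \<longrightarrow> 1 \<le> s!i \<longrightarrow> i < length s \<longrightarrow> (\<exists>x. pt_le x s \<and> deg x = d \<and> 1 \<le> x!i)"
proof (induction n)
  case 0
  then show ?case unfolding pt_le_def by auto
next
  case (Suc n)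
  show ?case
  proof (intro allI impI)
    fix s assume s: "deg s = Suc n + d" "1 \<le> d" "1 \<le> s!i" "i < length s"
    obtain j where j: "j < length s" "1 \<le> s!j" "j \<noteq> i \<or> 2 \<le> s!i"
      using dec_exists[of s i] s by auto
    define s' where "s' = s[j := s!j - 1]"
    have "deg s' = n + d" using deg_upd[OF j(1,2)] s(1) unfolding s'_def by simp
    moreover have "1 \<le> s'!i" using j s unfolding s'_def by (auto simp: nth_list_update)
    moreover have "i < length s'" using s unfolding s'_def by simp
    ultimately obtain x where "pt_le x s'" "deg x = d" "1 \<le> x!i" using Suc s(2) by blast
    then show "\<exists>x. pt_le x s \<and> deg x = d \<and> 1 \<le> x!i"
      using pt_le_trans pt_le_upd unfolding s'_def by blast
  qed
qed

lemma down:
  assumes "d \<le> deg s" "1 \<le> d" "1 \<le> s!i" "i < length s"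
  shows "\<exists>x. pt_le x s \<and> deg x = d \<and> 1 \<le> x!i"
  using down_aux[of "deg s - d" d i] assms by simp

definition unit :: "nat \<Rightarrow> nat \<Rightarrow> nat list" where
  "unit k i = (replicate k 0)[i := 1]"

lemma deg1_unit:
  assumes "length x = k" "deg x = 1"
  shows "\<exists>i<k. x = unit k i"
proof -
  obtain i where i: "i < k" "1 \<le> x!i"
  proof (rule ccontr)
    assume "\<not> thesis"
    then have "\<forall>i<k. x!i = 0" using that by (metis One_nat_def Suc_leI neq0_conv)
    then have "deg x = 0" unfolding deg_sum assms(1) by simp
    then show False using assms(2) by simp
  qed
  have "deg x = x!i + (\<Sum>l\<in>{..<k}-{i}. x!l)" unfolding deg_sum assms(1) using i by (simp add: sum.remove)
  then have xi: "x!i = 1" and r: "(\<Sum>l\<in>{..<k}-{i}. x!l) = 0" using assms(2) i by auto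
  have "\<forall>l\<in>{..<k}-{i}. x!l = 0" using r by simp
  then have "x = unit k i" unfolding unit_def using xi assms(1) i
    by (intro nth_equalityI) (auto simp: nth_list_update)
  then show ?thesis using i by blast
qed

lemma unit_nth: "i < k \<Longrightarrow> l < k \<Longrightarrow> unit k i ! l = (if l = i then 1 else 0)"
  unfolding unit_def by (auto simp: nth_list_update)

lemma unit_len: "length (unit k i) = k" unfolding unit_def by simp

lemma unit_deg: assumes "i < k" shows "deg (unit k i) = 1"
proof -
  have "deg (unit k i) = (\<Sum>l<k. if l = i then 1 else 0)" unfolding deg_sum unit_len
    using unit_nth[OF assms] by simp
  also have "\<dots> = 1" using assms by simp
  finally show ?thesis .
qed

lemma main_ineq:
  assumes M: "M_partition k q m lam"
  shows "k \<le> q"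
proof -
  have P: "lam \<in> partitions k (1 + k + q + m)" and So: "Soc lam \<subseteq> {x\<in>lam. deg x \<ge> 3}"
    and h1: "hfun lam 1 = k" and h2: "hfun lam 2 = q" using M unfolding M_partition_def by auto
  have len: "\<And>x. x \<in> lam \<Longrightarrow> length x = k" and fin: "finite lam"
    and dc: "\<And>x y. x \<in> lam \<Longrightarrow> length y = k \<Longrightarrow> pt_le y x \<Longrightarrow> y \<in> lam"
    using P unfolding partitions_def by auto
  have sub: "{x\<in>lam. deg x = 1} \<subseteq> unit k ` {..<k}" using deg1_unit len by blast
  have inj: "inj_on (unit k) {..<k}"
  proof
    fix i j assume "i \<in> {..<k}" "j \<in> {..<k}" "unit k i = unit k j"
    then have ik: "i < k" and jk: "j < k" and e: "unit k i = unit k j" by auto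
    have "unit k j ! i = 1" using e unit_nth[OF ik ik] by simp
    moreover have "unit k j ! i = (if i = j then 1 else 0)" using unit_nth[OF jk ik] .
    ultimately show "i = j" by (cases "i = j") simp_all
  qed
  have "card (unit k ` {..<k}) = k" using inj by (simp add: card_image)
  then have eq: "{x\<in>lam. deg x = 1} = unit k ` {..<k}"
    using sub h1 unfolding hfun_def by (intro card_subset_eq) auto
  have unit_in: "\<And>i. i < k \<Longrightarrow> unit k i \<in> lam" using eq by blast
  have W: "\<forall>i\<in>{..<k}. \<exists>x. length x = k \<and> deg x = 3 \<and> 0 < x!i \<and>
      (\<forall>y. length y = k \<and> deg y = 2 \<and> pt_le y x \<longrightarrow> y\<in>{x\<in>lam. deg x = 2})"
  proof
    fix i assume "i \<in> {..<k}" then have ik: "i < k" by simp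
    define A where "A = {z\<in>lam. pt_le (unit k i) z}"
    have Afin: "finite A" using fin unfolding A_def by simp
    have Ane: "A \<noteq> {}" using unit_in[OF ik] unfolding A_def pt_le_def by auto
    obtain s where sA: "s \<in> A" and smax: "\<forall>z\<in>A. deg z \<le> deg s"
    proof -
      have "Max (deg ` A) \<in> deg ` A" using Afin Ane by simp
      then obtain s where "s \<in> A" "deg s = Max (deg ` A)" by auto
      moreover have "\<forall>z\<in>A. deg z \<le> Max (deg ` A)" using Afin by simp
      ultimately show ?thesis using that by auto
    qed
    have "s \<in> Soc lam" unfolding Soc_def
    proof (intro CollectI conjI ballI impI)
      show "s \<in> lam" using sA unfolding A_def by simp
      fix y assume y: "y \<in> lam" "pt_le s y"
      then have "y \<in> A" using sA pt_le_trans unfolding A_def by blast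
      then have "deg y \<le> deg s" using smax by simp
      then show "y = s" using pt_le_deg[OF y(2)] pt_le_deg_eq[OF y(2)] by simp
    qed
    then have s3: "3 \<le> deg s" and sl: "s \<in> lam" using So by auto
    have us: "pt_le (unit k i) s" using sA unfolding A_def by simp
    have si: "1 \<le> s!i" using us ik unit_nth[OF ik ik] unit_len unfolding pt_le_def by force
    have isl: "i < length s" using len[OF sl] ik by simp
    obtain x where x: "pt_le x s" "deg x = 3" "1 \<le> x!i" using down[of 3 s i] s3 si isl by auto
    have lx: "length x = k" using x(1) len[OF sl] unfolding pt_le_def by simp
    have xl: "x \<in> lam" using dc[OF sl lx x(1)] .
    show "\<exists>x. length x = k \<and> deg x = 3 \<and> 0 < x!i \<and>
      (\<forall>y. length y = k \<and> deg y = 2 \<and> pt_le y x \<longrightarrow> y\<in>{x\<in>lam. deg x = 2})"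
      using lx x xl dc by (intro exI[of _ x]) auto
  qed
  have "card {..<k} \<le> card {x\<in>lam. deg x = 2}"
    by (rule graph[OF _ _ _ _ W]) (use fin len in auto)
  then show ?thesis using h2 unfolding hfun_def by simp
qed

theorem proposition4p2:
  fixes k q m :: nat
  assumes "0 < k" and "0 < q" and "0 < m" and "q < k"
  shows "alpha k q m = 0 \<and> (\<forall>lam. \<not> M_partition k q m lam)"
proof -
  have N: "\<forall>lam. \<not> M_partition k q m lam" using main_ineq assms(4) by fastforce
  then have "{lam. M_partition k q m lam} = {}" by simp
  then have "alpha k q m = 0" unfolding alpha_def by (metis card.empty)
  then show ?thesis using N by simp
qed

end
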